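(* Let $R$ be a finite local commutative ring with residue field of order $q$, let $K\le R^\times$, and suppose the cyclotomic scheme $\mathrm{Cyc}(K,R)$ is normal. Suppose that $K+I=K$ for some ideal $I$ of $R$ (where $K+I=\{k+x: k\in K, x\in I\}$). Then $I=\{0\}$ unless $q=2$. Moreover, if $q=2$, then $I\subseteq I_0$, where $I_0=\{x\in\mathrm{rad}(R):\ x\,\mathrm{rad}(R)=\{0\}\}$.
   Context: All rings have an identity. For a finite local commutative ring $R$, $\mathrm{rad}(R)$ is its unique maximal ideal and $R/\mathrm{rad}(R)$ its residue field. For a subgroup $K$ of $R^\times$, the cyclotomic scheme $\mathrm{Cyc}(K,R)$ is the pair $(R,\mathrm{Rel}(K,R))$, where $\mathrm{Rel}(K,R)$ is the set of binary relations $\{(x,y)\in R\times R:\ y-x\in rK\}$, $r\in R$. Its automorphism group $\mathrm{Aut}(\mathcal C)$ is the group of permutations $f$ of $R$ with $S^f=S$ for every $S\in\mathrm{Rel}(K,R)$. $\mathrm{A\Gamma L}_1(R)$ is the group of permutations $x\mapsto ax^\sigma+b$ with $a\in R^\times$, $b\in R$, $\sigma\in\mathrm{Aut}(R)$. The scheme is normal if $\mathrm{Aut}(\mathcal C)\le\mathrm{A\Gamma L}_1(R)$. *)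

theory Defs
  imports Main
begin

definition is_ideal :: "'a::comm_ring_1 set \<Rightarrow> bool" where
  "is_ideal I \<longleftrightarrow> 0 \<in> I \<and> (\<forall>x\<in>I. \<forall>y\<in>I. x + y \<in> I) \<and> (\<forall>r. \<forall>x\<in>I. r * x \<in> I)"

definition maximal_ideal :: "'a::comm_ring_1 set \<Rightarrow> bool" where
  "maximal_ideal M \<longleftrightarrow> is_ideal M \<and> M \<noteq> UNIV \<and>
     (\<forall>J. is_ideal J \<and> M \<subseteq> J \<longrightarrow> J = M \<or> J = UNIV)"

definition local_ring :: "'a::comm_ring_1 itself \<Rightarrow> bool" where
  "local_ring TYPE('a) \<longleftrightarrow> (\<exists>!M::'a set. maximal_ideal M)"

definition rad :: "'a::comm_ring_1 set" where
  "rad = (THE M. maximal_ideal M)"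

definition residue_field :: "'a::comm_ring_1 set set" where
  "residue_field = {(\<lambda>y. x + y) ` rad | x. True}"

definition unit_set :: "'a::comm_ring_1 set" where
  "unit_set = {x. x dvd 1}"

definition is_unit_subgroup :: "'a::comm_ring_1 set \<Rightarrow> bool" where
  "is_unit_subgroup K \<longleftrightarrow> K \<subseteq> unit_set \<and> 1 \<in> K \<and>
     (\<forall>x\<in>K. \<forall>y\<in>K. x * y \<in> K) \<and> (\<forall>x\<in>K. \<exists>y\<in>K. x * y = 1)"

definition cyc_rels :: "'a::comm_ring_1 set \<Rightarrow> ('a \<times> 'a) set set" where
  "cyc_rels K = {{(x, y). y - x \<in> (\<lambda>k. r * k) ` K} | r. True}"

definition cyc_aut :: "'a::comm_ring_1 set \<Rightarrow> ('a \<Rightarrow> 'a) set" where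
  "cyc_aut K = {f. bij f \<and> (\<forall>S\<in>cyc_rels K. (\<lambda>(x, y). (f x, f y)) ` S = S)}"

definition ring_aut :: "('a::comm_ring_1 \<Rightarrow> 'a) set" where
  "ring_aut = {\<sigma>. bij \<sigma> \<and> (\<forall>x y. \<sigma> (x + y) = \<sigma> x + \<sigma> y) \<and>
      (\<forall>x y. \<sigma> (x * y) = \<sigma> x * \<sigma> y) \<and> \<sigma> 1 = 1}"

definition AGammaL1 :: "('a::comm_ring_1 \<Rightarrow> 'a) set" where
  "AGammaL1 = {(\<lambda>x. a * \<sigma> x + b) | a b \<sigma>. a dvd 1 \<and> \<sigma> \<in> ring_aut}"

definition cyc_normal :: "'a::comm_ring_1 set \<Rightarrow> bool" where
  "cyc_normal K \<longleftrightarrow> cyc_aut K \<subseteq> AGammaL1"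

definition I0 :: "'a::comm_ring_1 set" where
  "I0 = {x \<in> rad. \<forall>y\<in>rad. x * y = 0}"

end

theory Submission
  imports Defs
begin

lemma ideal_add: "is_ideal I \<Longrightarrow> x \<in> I \<Longrightarrow> y \<in> I \<Longrightarrow> x + y \<in> I"
  unfolding is_ideal_def by blast

lemma ideal_mult: "is_ideal I \<Longrightarrow> x \<in> I \<Longrightarrow> r * x \<in> I"
  unfolding is_ideal_def by blast

lemma ideal_0: "is_ideal I \<Longrightarrow> 0 \<in> I"
  unfolding is_ideal_def by blast

lemma rad_max:
  assumes "local_ring TYPE('a::{comm_ring_1,finite})"
  shows "maximal_ideal (rad::'a set)"
proof -
  from assms have "\<exists>!M::'a set. maximal_ideal M" by (simp add: local_ring_def)
  then show ?thesis unfolding rad_def by (rule theI')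
qed

lemma rad_unique:
  assumes "local_ring TYPE('a::{comm_ring_1,finite})" "maximal_ideal (J::'a set)"
  shows "J = rad"
proof -
  from assms(1) have u: "\<exists>!M::'a set. maximal_ideal M" by (simp add: local_ring_def)
  show ?thesis unfolding rad_def using u assms(2) by (metis the_equality)
qed

lemma nonrad_unit:
  assumes "local_ring TYPE('a::{comm_ring_1,finite})" "(x::'a) \<notin> rad"
  shows "x dvd 1"
proof (rule ccontr)
  assume nu: "\<not> x dvd 1"
  define J0 where "J0 = range (\<lambda>r. x * r)"
  define C where "C = {J. is_ideal J \<and> J0 \<subseteq> J \<and> J \<noteq> (UNIV::'a set)}"
  have J0i: "is_ideal J0" unfolding is_ideal_def J0_def
  proof (intro conjI ballI allI)
    show "0 \<in> range (\<lambda>r. x * r)" by (rule image_eqI[where x=0]) auto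
    fix a b assume "a \<in> range (\<lambda>r. x * r)" "b \<in> range (\<lambda>r. x * r)"
    then obtain a' b' where "a = x * a'" "b = x * b'" by auto
    thus "a + b \<in> range (\<lambda>r. x * r)" by (intro image_eqI[where x="a' + b'"]) (auto simp: distrib_left)
  next
    fix r a assume "a \<in> range (\<lambda>r. x * r)"
    then obtain a' where "a = x * a'" by auto
    thus "r * a \<in> range (\<lambda>r. x * r)" by (intro image_eqI[where x="r * a'"]) (auto simp: mult.left_commute)
  qed
  have "1 \<notin> J0" using nu unfolding J0_def by (auto simp: dvd_def)
  hence "J0 \<in> C" using J0i unfolding C_def by auto
  have fC: "finite C" by simp
  define m where "m = Max (card ` C)"
  have "m \<in> card ` C" unfolding m_def using fC \<open>J0 \<in> C\<close> by (intro Max_in) auto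
  then obtain J where J: "J \<in> C" "card J = m" by auto
  have mx: "\<And>J'. J' \<in> C \<Longrightarrow> card J' \<le> card J" using J fC unfolding m_def by auto
  have "maximal_ideal J" unfolding maximal_ideal_def
  proof (intro conjI allI impI)
    show "is_ideal J" "J \<noteq> UNIV" using J unfolding C_def by auto
    fix J' assume a: "is_ideal J' \<and> J \<subseteq> J'"
    show "J' = J \<or> J' = UNIV"
    proof (cases "J' = UNIV")
      case False
      hence "J' \<in> C" using a J unfolding C_def by auto
      hence "card J' \<le> card J" by (rule mx)
      moreover have "card J \<le> card J'" using a by (intro card_mono) auto
      ultimately have "J = J'" using a by (intro card_subset_eq) auto
      then show ?thesis by simp
    qed simp
  qed
  hence "J = rad" by (rule rad_unique[OF assms(1)])
  moreover have "x * 1 \<in> J0" unfolding J0_def by blast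
  hence "x \<in> J" using J unfolding C_def by auto
  ultimately show False using assms(2) by simp
qed

lemma unit_nonrad:
  assumes "local_ring TYPE('a::{comm_ring_1,finite})" "(x::'a) dvd 1"
  shows "x \<notin> rad"
proof
  assume xr: "x \<in> rad"
  have mi: "maximal_ideal (rad::'a set)" using assms(1) by (rule rad_max)
  hence ri: "is_ideal (rad::'a set)" and nu: "(rad::'a set) \<noteq> UNIV"
    unfolding maximal_ideal_def by auto
  from assms(2) obtain v where v: "1 = x * v" by (auto simp: dvd_def)
  have "v * x \<in> rad" using ideal_mult[OF ri xr] .
  hence one: "1 \<in> (rad::'a set)" using v by (simp add: mult.commute)
  have "y * 1 \<in> rad" for y :: 'a using ideal_mult[OF ri one] .
  hence "\<forall>y. (y::'a) \<in> rad" by simp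
  thus False using nu by auto
qed

lemma pres_aut:
  fixes K :: "'a::{comm_ring_1,finite} set"
  assumes K: "is_unit_subgroup K"
    and H: "\<And>x y. \<exists>u\<in>K. f y - f x = (y - x) * u"
  shows "f \<in> cyc_aut K"
proof -
  have injf: "inj f"
  proof (rule injI)
    fix x y assume e: "f x = f y"
    obtain u where u: "u \<in> K" "f y - f x = (y - x) * u" using H by blast
    have "u dvd 1" using u K unfolding is_unit_subgroup_def unit_set_def by auto
    then obtain v where "1 = u * v" by (auto simp: dvd_def)
    have "(y - x) * u = 0" using u e by simp
    hence "(y - x) * u * v = 0" by simp
    hence "y - x = 0" using \<open>1 = u * v\<close> by (metis mult.assoc mult_1_right)
    thus "x = y" by simp
  qed
  hence bf: "bij f" by (simp add: finite_UNIV_inj_surj bij_def)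
  have "\<forall>S\<in>cyc_rels K. (\<lambda>(x, y). (f x, f y)) ` S = S"
  proof
    fix S assume "S \<in> cyc_rels K"
    then obtain r where S: "S = {(x, y). y - x \<in> (\<lambda>k. r * k) ` K}"
      unfolding cyc_rels_def by auto
    have sub: "(\<lambda>(x, y). (f x, f y)) ` S \<subseteq> S"
    proof
      fix p assume "p \<in> (\<lambda>(x, y). (f x, f y)) ` S"
      then obtain x y where p: "p = (f x, f y)" and xy: "(x, y) \<in> S" by auto
      from xy S obtain k where k: "k \<in> K" "y - x = r * k" by auto
      obtain u where u: "u \<in> K" "f y - f x = (y - x) * u" using H by blast
      have "k * u \<in> K" using K k u unfolding is_unit_subgroup_def by auto
      moreover have "f y - f x = r * (k * u)" using u k by (simp add: mult.assoc)
      ultimately show "p \<in> S" using p S by auto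
    qed
    have "inj_on (\<lambda>(x, y). (f x, f y)) S"
    proof (rule inj_onI)
      fix p q assume "(\<lambda>(x, y). (f x, f y)) p = (\<lambda>(x, y). (f x, f y)) q"
      thus "p = q" using injf by (cases p, cases q) (simp add: inj_eq)
    qed
    hence "card ((\<lambda>(x, y). (f x, f y)) ` S) = card S" by (rule card_image)
    thus "(\<lambda>(x, y). (f x, f y)) ` S = S" using sub by (intro card_subset_eq) auto
  qed
  thus ?thesis using bf unfolding cyc_aut_def by auto
qed

lemma affine_law:
  fixes K :: "'a::{comm_ring_1,finite} set"
  assumes K: "is_unit_subgroup K" and N: "cyc_normal K"
    and H: "\<And>x y. \<exists>u\<in>K. f y - f x = (y - x) * u"
  shows "f (x + y) + f 0 = f x + f y"
proof -
  have "f \<in> cyc_aut K" using pres_aut[OF K H] by blast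
  hence "f \<in> AGammaL1" using N unfolding cyc_normal_def by auto
  then obtain a b \<sigma> where f: "f = (\<lambda>x. a * \<sigma> x + b)" and s: "\<sigma> \<in> ring_aut"
    unfolding AGammaL1_def by auto
  have add: "\<And>x y. \<sigma> (x + y) = \<sigma> x + \<sigma> y" using s unfolding ring_aut_def by auto
  have "\<sigma> 0 = 0" using add[of 0 0] by simp
  thus ?thesis using f add by (simp add: algebra_simps)
qed

lemma h_aut:
  fixes K I :: "'a::{comm_ring_1,finite} set"
  assumes KI: "{k + x | k x. k \<in> K \<and> x \<in> I} = K" and K: "is_unit_subgroup K"
    and Hh: "\<And>x y. \<exists>j\<in>I. h y - h x = (y - x) * j"
  shows "\<exists>u\<in>K. (y + h y) - (x + h x) = (y - x) * u"
proof -
  obtain j where j: "j \<in> I" "h y - h x = (y - x) * j" using Hh by blast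
  have "1 \<in> K" using K unfolding is_unit_subgroup_def by auto
  hence "1 + j \<in> K" using j KI by blast
  moreover have "(y + h y) - (x + h x) = (y - x) * (1 + j)" using j by (simp add: algebra_simps)
  ultimately show ?thesis by blast
qed

lemma cond_h:
  fixes I :: "'a::{comm_ring_1,finite} set"
  assumes L: "local_ring TYPE('a)" and I: "is_ideal I"
    and same: "\<And>x y. (x \<in> rad) = (y \<in> rad) \<Longrightarrow> \<exists>j\<in>I. h y - h x = (y - x) * j"
    and diff: "\<And>x y. (x \<in> rad) \<noteq> (y \<in> rad) \<Longrightarrow> h y - h x \<in> I"
  shows "\<exists>j\<in>I. h y - h x = (y - x) * j"
proof (cases "(x \<in> rad) = (y \<in> rad)")
  case True then show ?thesis by (rule same)
next
  case False
  have mi: "maximal_ideal (rad::'a set)" using L by (rule rad_max)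
  have ri: "is_ideal (rad::'a set)" using mi unfolding maximal_ideal_def by auto
  have "y - x \<notin> rad"
  proof
    assume a: "y - x \<in> rad"
    have b: "x - y \<in> rad" using ideal_mult[OF ri a, of "-1"] by simp
    show False
    proof (cases "x \<in> rad")
      case True
      have "(y - x) + x \<in> rad" using ideal_add[OF ri a True] .
      thus False using True False by simp
    next
      case f2: False
      hence yr: "y \<in> rad" using False by simp
      have "(x - y) + y \<in> rad" using ideal_add[OF ri b yr] .
      thus False using f2 by simp
    qed
  qed
  hence "y - x dvd 1" using L by (intro nonrad_unit)
  then obtain w where w: "1 = (y - x) * w" by (auto simp: dvd_def)
  have "w * (h y - h x) \<in> I" using ideal_mult[OF I diff[OF False]] .
  moreover have "h y - h x = (y - x) * (w * (h y - h x))"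
  proof -
    have "(y - x) * (w * (h y - h x)) = ((y - x) * w) * (h y - h x)" by (simp only: mult.assoc)
    also have "\<dots> = h y - h x" by (simp only: w[symmetric] mult_1_left)
    finally show ?thesis by simp
  qed
  ultimately show ?thesis by blast
qed

theorem theorem1p4:
  fixes K I :: "'a::{comm_ring_1, finite} set"
  assumes "local_ring TYPE('a)"
    and "is_unit_subgroup K"
    and "cyc_normal K"
    and "is_ideal I"
    and "{k + x | k x. k \<in> K \<and> x \<in> I} = K"
  shows "(card (residue_field :: 'a set set) \<noteq> 2 \<longrightarrow> I = {0}) \<and>
         (card (residue_field :: 'a set set) = 2 \<longrightarrow> I \<subseteq> I0)"
proof -
  note L = assms(1) and K = assms(2) and N = assms(3) and Ii = assms(4) and KI = assms(5)
  have mi: "maximal_ideal (rad::'a set)" using L by (rule rad_max)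
  have radi: "is_ideal (rad::'a set)" using mi unfolding maximal_ideal_def by auto
  have rad0: "0 \<in> (rad::'a set)" using radi unfolding is_ideal_def by blast
  have Irad: "I \<subseteq> rad"
  proof
    fix i assume i: "i \<in> I"
    show "i \<in> rad"
    proof (rule ccontr)
      assume "i \<notin> rad"
      hence "i dvd 1" using L by (intro nonrad_unit)
      then obtain v where "1 = i * v" by (auto simp: dvd_def)
      hence "1 \<in> I" using i Ii unfolding is_ideal_def by (metis mult.commute)
      hence "(-1) * 1 \<in> I" using Ii unfolding is_ideal_def by blast
      moreover have "1 \<in> K" using K unfolding is_unit_subgroup_def by auto
      ultimately have "1 + (-1) \<in> {k + x | k x. k \<in> K \<and> x \<in> I}"
        by (intro CollectI exI[of _ 1] exI[of _ "-1"]) simp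
      hence "1 + (-1) \<in> K" using KI by simp
      hence "(0::'a) dvd 1" using K unfolding is_unit_subgroup_def unit_set_def by auto
      thus False by simp
    qed
  qed
  have ann: "i * m = 0" if i: "i \<in> I" and m: "m \<in> rad" for i m
  proof -
    define h where "h = (\<lambda>x::'a. if x \<in> rad then 0 else i * x)"
    have Hh: "\<exists>j\<in>I. h y - h x = (y - x) * j" for x y
    proof (rule cond_h[OF L Ii])
      fix x y :: 'a assume s: "(x \<in> rad) = (y \<in> rad)"
      have z: "0 \<in> I" using Ii unfolding is_ideal_def by blast
      show "\<exists>j\<in>I. h y - h x = (y - x) * j"
      proof (cases "x \<in> rad")
        case True
        hence "h y - h x = (y - x) * 0" using s unfolding h_def by simp
        thus ?thesis using z by blast
      next
        case False
        hence "h y - h x = (y - x) * i" using s unfolding h_def by (simp add: algebra_simps)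
        thus ?thesis using i by blast
      qed
    next
      fix x y :: 'a assume s: "(x \<in> rad) \<noteq> (y \<in> rad)"
      show "h y - h x \<in> I"
      proof (cases "x \<in> rad")
        case True
        hence "h y - h x = y * i" using s unfolding h_def by (simp add: mult.commute)
        moreover have "y * i \<in> I" using i Ii unfolding is_ideal_def by blast
        ultimately show ?thesis by simp
      next
        case False
        hence "h y - h x = (- x) * i" using s unfolding h_def by (simp add: mult.commute)
        moreover have "(- x) * i \<in> I" using i Ii unfolding is_ideal_def by blast
        ultimately show ?thesis by simp
      qed
    qed
    have "(m + 1) + h (m + 1) + (0 + h 0) = (m + h m) + (1 + h 1)"
      by (rule affine_law[OF K N, of "\<lambda>x. x + h x"]) (rule h_aut[OF KI K Hh])
    moreover have "(1::'a) \<notin> rad" by (rule unit_nonrad[OF L]) simp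
    moreover have "m + 1 \<notin> rad"
    proof
      assume "m + 1 \<in> rad"
      moreover have "(-1) * m \<in> rad" using m radi unfolding is_ideal_def by blast
      ultimately have "(m + 1) + (-1) * m \<in> rad" using radi unfolding is_ideal_def by blast
      thus False using \<open>1 \<notin> rad\<close> by simp
    qed
    moreover have "h (m + 1) = i * (m + 1)" "h 0 = 0" "h m = 0" "h 1 = i"
      using \<open>m + 1 \<notin> rad\<close> \<open>1 \<notin> rad\<close> m rad0 unfolding h_def by simp_all
    ultimately show ?thesis by (simp add: algebra_simps)
  qed
  have part2: "I \<subseteq> I0" using Irad ann unfolding I0_def by auto
  have part1: "I = {0}" if q: "card (residue_field :: 'a set set) \<noteq> 2"
  proof -
    have "\<exists>x::'a. x \<notin> rad \<and> x - 1 \<notin> rad"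
    proof (rule ccontr)
      assume "\<not> ?thesis"
      hence all: "\<And>x::'a. x \<in> rad \<or> x - 1 \<in> rad" by blast
      have A: "(\<lambda>y. x + y) ` rad = rad" if "x \<in> rad" for x :: 'a
      proof
        show "(\<lambda>y. x + y) ` rad \<subseteq> rad" using that radi unfolding is_ideal_def by auto
        show "rad \<subseteq> (\<lambda>y. x + y) ` rad"
        proof
          fix z :: 'a assume z: "z \<in> rad"
          have "(-1) * x \<in> rad" using that radi unfolding is_ideal_def by blast
          hence "z + (-1) * x \<in> rad" using z radi unfolding is_ideal_def by blast
          thus "z \<in> (\<lambda>y. x + y) ` rad" by (intro image_eqI[where x="z - x"]) auto
        qed
      qed
      have B: "(\<lambda>y. x + y) ` rad = (\<lambda>y. 1 + y) ` rad" if "x - 1 \<in> rad" for x :: 'a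
      proof -
        have "(\<lambda>y. x + y) ` rad = (\<lambda>y. 1 + y) ` ((\<lambda>y. (x - 1) + y) ` rad)"
          by (auto simp: image_image algebra_simps)
        thus ?thesis using A[OF that] by simp
      qed
      have "residue_field = {rad, (\<lambda>y. (1::'a) + y) ` rad}"
      proof
        show "residue_field \<subseteq> {rad, (\<lambda>y. (1::'a) + y) ` rad}"
        proof
          fix S :: "'a set" assume "S \<in> residue_field"
          then obtain x :: 'a where S: "S = (\<lambda>y. x + y) ` rad" unfolding residue_field_def by auto
          show "S \<in> {rad, (\<lambda>y. (1::'a) + y) ` rad}"
          proof (cases "x \<in> rad")
            case True thus ?thesis using A S by simp
          next
            case False
            hence "x - 1 \<in> rad" using all by metis
            thus ?thesis using B S by simp
          qed
        qed
        have "rad = (\<lambda>y. (0::'a) + y) ` rad" by simp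
        hence "rad \<in> (residue_field :: 'a set set)" unfolding residue_field_def by blast
        moreover have "(\<lambda>y. (1::'a) + y) ` rad \<in> residue_field" unfolding residue_field_def by blast
        ultimately show "{rad, (\<lambda>y. (1::'a) + y) ` rad} \<subseteq> residue_field" by simp
      qed
      moreover have "rad \<noteq> (\<lambda>y. (1::'a) + y) ` rad"
      proof
        assume "rad = (\<lambda>y. (1::'a) + y) ` rad"
        hence "1 + 0 \<in> (rad::'a set)" using radi unfolding is_ideal_def by blast
        thus False using unit_nonrad[OF L, of 1] by simp
      qed
      ultimately have "card (residue_field :: 'a set set) = 2"
      proof -
        assume e: "residue_field = {rad, (\<lambda>y. (1::'a) + y) ` rad}" and n: "rad \<noteq> (\<lambda>y. (1::'a) + y) ` rad"
        have "card {rad, (\<lambda>y. (1::'a) + y) ` rad} = 2"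
          using n by (rule card_2_iff[THEN iffD2, OF exI, OF exI, OF conjI[OF refl]])
        thus ?thesis by (subst e)
      qed
      thus False using q by simp
    qed
    then obtain x :: 'a where x: "x \<notin> rad" "x - 1 \<notin> rad" by blast
    show ?thesis
    proof
      show "I \<subseteq> {0}"
      proof
        fix i assume i: "i \<in> I"
        define h where "h = (\<lambda>x::'a. if x \<in> rad then 0 else i)"
        have Hh: "\<exists>j\<in>I. h y - h x = (y - x) * j" for x y
        proof (rule cond_h[OF L Ii])
          fix x y :: 'a assume "(x \<in> rad) = (y \<in> rad)"
          then show "\<exists>j\<in>I. h y - h x = (y - x) * j"
            using Ii unfolding h_def is_ideal_def by (intro bexI[where x=0]) auto
        next
          fix x y :: 'a assume "(x \<in> rad) \<noteq> (y \<in> rad)"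
          show "h y - h x \<in> I"
          proof (cases "x \<in> rad")
            case True
            hence "h y - h x = i" using \<open>(x \<in> rad) \<noteq> (y \<in> rad)\<close> unfolding h_def by simp
            thus ?thesis using i by simp
          next
            case False
            hence "h y - h x = (-1) * i" using \<open>(x \<in> rad) \<noteq> (y \<in> rad)\<close> unfolding h_def by simp
            moreover have "(-1) * i \<in> I" using i Ii unfolding is_ideal_def by blast
            ultimately show ?thesis by simp
          qed
        qed
        have "(x + -1) + h (x + -1) + (0 + h 0) = (x + h x) + (-1 + h (-1))"
          by (rule affine_law[OF K N, of "\<lambda>x. x + h x"]) (rule h_aut[OF KI K Hh])
        moreover have "(-1::'a) \<notin> rad" by (rule unit_nonrad[OF L]) simp
        moreover have "0 \<in> (rad::'a set)" using radi unfolding is_ideal_def by auto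
        moreover have "h (x + -1) = i" "h 0 = 0" "h x = i" "h (-1) = i"
          using x \<open>-1 \<notin> rad\<close> \<open>0 \<in> rad\<close> unfolding h_def by auto
        ultimately have "i = 0" by (simp add: algebra_simps)
        thus "i \<in> {0}" by simp
      qed
      show "{0} \<subseteq> I" using Ii unfolding is_ideal_def by auto
    qed
  qed
  show ?thesis using part1 part2 by blast
qed

end
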